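(* Let $f(x,y)=c_{12}(xy^2+x^2y)+c_{34}(x^2+y^2)+c_5xy+c_{67}(x+y)+c_8$ with $c_{12},c_{34},c_5,c_{67}\neq0$ and $c_8$ arbitrary (with $v_8=+\infty$ if $c_8=0$), and suppose $C(\operatorname{trop}(f))$ is a truncated honeycomb, i.e. $\mathcal{S}_v$ contains the six triangles $[P_1,P_2,P_5],[P_1,P_4,P_5],[P_2,P_3,P_5],[P_4,P_5,P_7],[P_3,P_5,P_6],[P_5,P_6,P_7]$. Then $C(\operatorname{trop}(f))$ is quasi-symmetric (all six sides of the hexagonal cycle have the same lattice length) if and only if $$2v_{34}=v_{12}+v_{67}\quad\text{and}\quad -v_5+2v_{67}<v_8 .$$ In that case the lattice length of each side of the hexagon is $|v_{34}-v_5|$, and, when $c_8\ne0$, the lattice length of the tail (the bounded edge dual to the segment $P_6P_7$) is $|v_5-2v_{67}+v_8|$. Moreover $C(\operatorname{trop}(f))$ is symmetric (quasi-symmetric and the six edges emanating from the hexagon are all rays, i.e. there is no tail) if and only if $2v_{34}=v_{12}+v_{67}$ and $v_8=\infty$ (i.e. $c_8=0$).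
   Context: $\mathbb{K}$ is a field with valuation $\operatorname{val}$, $v_k=\operatorname{val}(c_k)$. The tropicalization is $\operatorname{trop}(f)(X,Y)=\min(v_{12}+X+2Y,\,v_{12}+2X+Y,\,v_{34}+2X,\,v_{34}+2Y,\,v_5+X+Y,\,v_{67}+X,\,v_{67}+Y,\,v_8)$ (terms with zero coefficient omitted), and $C(\operatorname{trop}(f))$ is its non-differentiability locus. Label $P_1=(1,2),P_2=(2,1),P_3=(2,0),P_4=(0,2),P_5=(1,1),P_6=(1,0),P_7=(0,1),P_8=(0,0)$ with heights $h(P_1)=h(P_2)=v_{12}$, $h(P_3)=h(P_4)=v_{34}$, $h(P_5)=v_5$, $h(P_6)=h(P_7)=v_{67}$, $h(P_8)=v_8$; the regular subdivision $\mathcal{S}_v$ of the Newton polygon is the set of projections to $\mathbb{R}^2$ of the two-dimensional lower faces of the convex hull of the lifted support points $(P_k,h(P_k))$; the curve is dual to $\mathcal{S}_v$ (vertices ↔ cells, bounded edges ↔ interior edges, rays ↔ boundary edges). The lattice length of a bounded edge from $p$ to $q$ is the real $\lambda\ge0$ with $q-p=\lambda w$, where $w$ is the primitive integer vector in the direction of the edge. *)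

theory Defs
  imports "HOL-Analysis.Analysis"
begin

definition is_valuation :: "('a::field \<Rightarrow> ereal) \<Rightarrow> bool" where
  "is_valuation val \<longleftrightarrow>
     (\<forall>x. val x = \<infinity> \<longleftrightarrow> x = 0) \<and> (\<forall>x. val x \<noteq> -\<infinity>) \<and>
     (\<forall>x y. val (x * y) = val x + val y) \<and>
     (\<forall>x y. min (val x) (val y) \<le> val (x + y))"

definition Pt :: "nat \<Rightarrow> real \<times> real" where
  "Pt k = [(1,2),(2,1),(2,0),(0,2),(1,1),(1,0),(0,1),(0,0)] ! (k - 1)"

text \<open>Coefficient of the monomial x^a y^b with (a,b) = P_k in
  f = c12 (x y^2 + x^2 y) + c34 (x^2 + y^2) + c5 x y + c67 (x + y) + c8.\<close>
definition coefs :: "'a \<Rightarrow> 'a \<Rightarrow> 'a \<Rightarrow> 'a \<Rightarrow> 'a \<Rightarrow> nat \<Rightarrow> 'a" where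
  "coefs c12 c34 c5 c67 c8 k = [c12, c12, c34, c34, c5, c67, c67, c8] ! (k - 1)"

definition supp :: "(nat \<Rightarrow> 'a::zero) \<Rightarrow> nat set" where
  "supp c = {k \<in> {1..8}. c k \<noteq> 0}"

text \<open>Height h(P_k) = val(c_k) (finite on the support).\<close>
definition hgt :: "('a \<Rightarrow> ereal) \<Rightarrow> (nat \<Rightarrow> 'a) \<Rightarrow> nat \<Rightarrow> real" where
  "hgt val c k = real_of_ereal (val (c k))"

definition trop_term :: "('a \<Rightarrow> ereal) \<Rightarrow> (nat \<Rightarrow> 'a) \<Rightarrow> nat \<Rightarrow> real \<times> real \<Rightarrow> real" where
  "trop_term val c k x = hgt val c k + fst (Pt k) * fst x + snd (Pt k) * snd x"

definition trop :: "('a \<Rightarrow> ereal) \<Rightarrow> (nat \<Rightarrow> 'a::zero) \<Rightarrow> real \<times> real \<Rightarrow> real" where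
  "trop val c x = Min ((\<lambda>k. trop_term val c k x) ` supp c)"

definition newton_polygon :: "(nat \<Rightarrow> 'a::zero) \<Rightarrow> (real \<times> real) set" where
  "newton_polygon c = convex hull (Pt ` supp c)"

definition lifted :: "('a \<Rightarrow> ereal) \<Rightarrow> (nat \<Rightarrow> 'a::zero) \<Rightarrow> ((real \<times> real) \<times> real) set" where
  "lifted val c = (\<lambda>k. (Pt k, hgt val c k)) ` supp c"

definition lower_face :: "('a \<Rightarrow> ereal) \<Rightarrow> (nat \<Rightarrow> 'a::zero) \<Rightarrow> ((real \<times> real) \<times> real) set \<Rightarrow> bool" where
  "lower_face val c F \<longleftrightarrow> F \<noteq> {} \<and>
     (\<exists>a b d. (\<forall>p \<in> convex hull (lifted val c).
                  a * fst (fst p) + b * snd (fst p) + d \<le> snd p) \<and>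
              F = {p \<in> convex hull (lifted val c).
                  snd p = a * fst (fst p) + b * snd (fst p) + d})"

definition cells :: "('a \<Rightarrow> ereal) \<Rightarrow> (nat \<Rightarrow> 'a::zero) \<Rightarrow> (real \<times> real) set set" where
  "cells val c = {fst ` F | F. lower_face val c F \<and> aff_dim F = 2}"

definition dual_vertex :: "('a \<Rightarrow> ereal) \<Rightarrow> (nat \<Rightarrow> 'a::zero) \<Rightarrow> (real \<times> real) set \<Rightarrow> real \<times> real" where
  "dual_vertex val c \<sigma> =
     (THE x. \<forall>k \<in> supp c. Pt k \<in> \<sigma> \<longrightarrow> trop_term val c k x = trop val c x)"

definition primitive_vec :: "int \<times> int \<Rightarrow> bool" where
  "primitive_vec w \<longleftrightarrow> w \<noteq> (0, 0) \<and> gcd (fst w) (snd w) = 1"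

definition lattice_length :: "real \<times> real \<Rightarrow> real \<times> real \<Rightarrow> real" where
  "lattice_length p q =
     (THE l. l \<ge> 0 \<and> (\<exists>w. primitive_vec w \<and>
         q - p = (l * of_int (fst w), l * of_int (snd w))))"

definition tri :: "nat \<Rightarrow> nat \<Rightarrow> nat \<Rightarrow> (real \<times> real) set" where
  "tri i j k = convex hull {Pt i, Pt j, Pt k}"

text \<open>The six triangles around P_5, in cyclic order; consecutive ones share the
  interior edge P_5P_2, P_5P_3, P_5P_6, P_5P_7, P_5P_4, P_5P_1 respectively.\<close>
definition hex_cells :: "(real \<times> real) set list" where
  "hex_cells = [tri 1 2 5, tri 2 3 5, tri 3 5 6, tri 5 6 7, tri 4 5 7, tri 1 4 5]"

definition truncated_honeycomb :: "('a \<Rightarrow> ereal) \<Rightarrow> (nat \<Rightarrow> 'a::zero) \<Rightarrow> bool" where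
  "truncated_honeycomb val c \<longleftrightarrow> set hex_cells \<subseteq> cells val c"

definition hex_side_lengths :: "('a \<Rightarrow> ereal) \<Rightarrow> (nat \<Rightarrow> 'a::zero) \<Rightarrow> real list" where
  "hex_side_lengths val c =
     map (\<lambda>i. lattice_length (dual_vertex val c (hex_cells ! i))
                              (dual_vertex val c (hex_cells ! ((i + 1) mod 6)))) [0..<6]"

definition quasi_symmetric :: "('a \<Rightarrow> ereal) \<Rightarrow> (nat \<Rightarrow> 'a::zero) \<Rightarrow> bool" where
  "quasi_symmetric val c \<longleftrightarrow> (\<forall>l \<in> set (hex_side_lengths val c). l = hex_side_lengths val c ! 0)"

text \<open>The remaining edges of the six triangles (dual to the six edges emanating from the
  hexagon): P_1P_2, P_2P_3, P_3P_6, P_6P_7, P_7P_4, P_4P_1. The dual edge is a ray iff the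
  segment is a boundary edge, i.e. lies in the boundary of the Newton polygon.\<close>
definition outer_edges :: "(real \<times> real) set list" where
  "outer_edges = [closed_segment (Pt 1) (Pt 2), closed_segment (Pt 2) (Pt 3),
                  closed_segment (Pt 3) (Pt 6), closed_segment (Pt 6) (Pt 7),
                  closed_segment (Pt 7) (Pt 4), closed_segment (Pt 4) (Pt 1)]"

definition symmetric_curve :: "('a \<Rightarrow> ereal) \<Rightarrow> (nat \<Rightarrow> 'a::zero) \<Rightarrow> bool" where
  "symmetric_curve val c \<longleftrightarrow> quasi_symmetric val c \<and>
     (\<forall>e \<in> set outer_edges. e \<subseteq> frontier (newton_polygon c))"

end

theory Submission
  imports Defs
begin



lemma inner_lift: "((a,b),-1) \<bullet> (p::(real\<times>real)\<times>real) = a * fst(fst p) + b * snd(fst p) - snd p"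
  by (cases p) (auto simp: inner_Pair)

lemma hull_above:
  fixes L :: "((real\<times>real)\<times>real) set"
  assumes "\<forall>y\<in>L. a * fst(fst y) + b * snd(fst y) + d \<le> snd y"
  shows "\<forall>p\<in>convex hull L. a * fst(fst p) + b * snd(fst p) + d \<le> snd p"
proof -
  have "convex hull L \<subseteq> {p. ((a,b),-1) \<bullet> p \<le> -d}"
  proof (rule hull_minimal)
    show "convex {p. ((a,b),-1) \<bullet> p \<le> -d}" by (rule convex_halfspace_le)
    show "L \<subseteq> {p. ((a,b),-1) \<bullet> p \<le> -d}" using assms by (auto simp: inner_lift)
  qed
  then show ?thesis by (auto simp: inner_lift)
qed

lemma face_conv:
  fixes L :: "((real\<times>real)\<times>real) set"
  assumes fin: "finite L" and le: "\<forall>y\<in>L. a * fst(fst y) + b * snd(fst y) + d \<le> snd y"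
  shows "{p \<in> convex hull L. snd p = a * fst(fst p) + b * snd(fst p) + d}
       = convex hull {y\<in>L. snd y = a * fst(fst y) + b * snd(fst y) + d}"
proof
  let ?n = "((a,b),-1) :: (real\<times>real)\<times>real"
  have eq: "{p \<in> convex hull L. snd p = a * fst(fst p) + b * snd(fst p) + d} = convex hull L \<inter> {p. ?n \<bullet> p = -d}"
    by (auto simp: inner_lift)
  have "convex hull L \<inter> {p. ?n \<bullet> p = -d} face_of convex hull L"
    apply (rule face_of_Int_supporting_hyperplane_le)
     apply (simp add: convex_convex_hull)
    using hull_above[OF le] by (auto simp: inner_lift)
  then obtain S' where S': "S' \<subseteq> L" "convex hull L \<inter> {p. ?n \<bullet> p = -d} = convex hull S'"
    using face_of_convex_hull_subset[OF finite_imp_compact[OF fin]] by blast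
  have "S' \<subseteq> {y\<in>L. snd y = a * fst(fst y) + b * snd(fst y) + d}"
  proof
    fix y assume y: "y \<in> S'"
    then have "y \<in> convex hull L \<inter> {p. ?n \<bullet> p = -d}"
      using S' hull_subset[of S' convex] by auto
    then show "y \<in> {y\<in>L. snd y = a * fst(fst y) + b * snd(fst y) + d}"
      using y S' by (auto simp: inner_lift)
  qed
  then have "convex hull S' \<subseteq> convex hull {y\<in>L. snd y = a * fst(fst y) + b * snd(fst y) + d}"
    by (rule hull_mono)
  then show "{p \<in> convex hull L. snd p = a * fst(fst p) + b * snd(fst p) + d}
       \<subseteq> convex hull {y\<in>L. snd y = a * fst(fst y) + b * snd(fst y) + d}"
    unfolding eq S'(2) .
next
  let ?n = "((a,b),-1) :: (real\<times>real)\<times>real"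
  have "convex hull {y\<in>L. snd y = a * fst(fst y) + b * snd(fst y) + d} \<subseteq> {p. ?n \<bullet> p = -d}"
    proof (rule hull_minimal)
    show "convex {p. ?n \<bullet> p = -d}" by (rule convex_hyperplane)
  qed (auto simp: inner_lift)
  moreover have "convex hull {y\<in>L. snd y = a * fst(fst y) + b * snd(fst y) + d} \<subseteq> convex hull L"
    by (rule hull_mono) auto
  ultimately show "convex hull {y\<in>L. snd y = a * fst(fst y) + b * snd(fst y) + d}
     \<subseteq> {p \<in> convex hull L. snd p = a * fst(fst p) + b * snd(fst p) + d}"
    by (auto simp: inner_lift)
qed


lemma finite_supp: "finite (supp c)"
  unfolding supp_def by simp

lemma finite_lifted: "finite (lifted val c)"
  unfolding lifted_def by (rule finite_imageI[OF finite_supp])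

lemma on_lifted:
  "{y \<in> lifted val c. snd y = a * fst(fst y) + b * snd(fst y) + d}
   = (\<lambda>k. (Pt k, hgt val c k)) ` {k\<in>supp c. hgt val c k = a * fst (Pt k) + b * snd (Pt k) + d}"
  unfolding lifted_def by auto

lemma fst_hull: "fst ` (convex hull M) = convex hull (fst ` M)"
  by (rule convex_hull_linear_image) (rule linear_fst)

lemma cell_char:
  assumes "\<sigma> \<in> cells val c"
  obtains a b d where "\<forall>k\<in>supp c. a * fst (Pt k) + b * snd (Pt k) + d \<le> hgt val c k"
    "\<sigma> = fst ` {p \<in> convex hull (lifted val c). snd p = a * fst(fst p) + b * snd(fst p) + d}"
    "\<sigma> = convex hull (Pt ` {k\<in>supp c. hgt val c k = a * fst (Pt k) + b * snd (Pt k) + d})"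
    "aff_dim (convex hull ((\<lambda>k. (Pt k, hgt val c k)) ` {k\<in>supp c. hgt val c k = a * fst (Pt k) + b * snd (Pt k) + d})) = 2"
proof -
  obtain F a b d where F: "\<sigma> = fst ` F" "aff_dim F = 2"
    "\<forall>p \<in> convex hull (lifted val c). a * fst (fst p) + b * snd (fst p) + d \<le> snd p"
    "F = {p \<in> convex hull (lifted val c). snd p = a * fst (fst p) + b * snd (fst p) + d}"
    using assms unfolding cells_def lower_face_def by blast
  have valid: "\<forall>y\<in>lifted val c. a * fst(fst y) + b * snd(fst y) + d \<le> snd y"
    using F(3) hull_subset[of "lifted val c" convex] by auto
  have validk: "\<forall>k\<in>supp c. a * fst (Pt k) + b * snd (Pt k) + d \<le> hgt val c k"
    using valid unfolding lifted_def by auto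
  have FF: "F = convex hull ((\<lambda>k. (Pt k, hgt val c k)) ` {k\<in>supp c. hgt val c k = a * fst (Pt k) + b * snd (Pt k) + d})"
    by (simp only: F(4) face_conv[OF finite_lifted valid] on_lifted)
  have s3: "\<sigma> = convex hull (Pt ` {k\<in>supp c. hgt val c k = a * fst (Pt k) + b * snd (Pt k) + d})"
    unfolding F(1) FF fst_hull image_image by simp
  show ?thesis by (rule that[OF validk F(1)[unfolded F(4)] s3 F(2)[unfolded FF]])
qed

lemma cell_intro:
  assumes valid: "\<forall>k\<in>supp c. a * fst (Pt k) + b * snd (Pt k) + d \<le> hgt val c k"
    and dim: "aff_dim (convex hull ((\<lambda>k. (Pt k, hgt val c k)) ` {k\<in>supp c. hgt val c k = a * fst (Pt k) + b * snd (Pt k) + d})) = 2"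
  shows "convex hull (Pt ` {k\<in>supp c. hgt val c k = a * fst (Pt k) + b * snd (Pt k) + d}) \<in> cells val c"
proof -
  let ?F = "{p \<in> convex hull (lifted val c). snd p = a * fst(fst p) + b * snd(fst p) + d}"
  have validl: "\<forall>y\<in>lifted val c. a * fst(fst y) + b * snd(fst y) + d \<le> snd y"
    using valid unfolding lifted_def by auto
  have FF: "?F = convex hull ((\<lambda>k. (Pt k, hgt val c k)) ` {k\<in>supp c. hgt val c k = a * fst (Pt k) + b * snd (Pt k) + d})"
    by (simp only: face_conv[OF finite_lifted validl] on_lifted)
  have ne: "?F \<noteq> {}"
  proof
    assume "?F = {}"
    then have "aff_dim ?F = -1" by (simp only: aff_dim_empty)
    with dim FF show False by simp
  qed
  have "lower_face val c ?F"
    unfolding lower_face_def using ne hull_above[OF validl] by blast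
  moreover have "fst ` ?F = convex hull (Pt ` {k\<in>supp c. hgt val c k = a * fst (Pt k) + b * snd (Pt k) + d})"
    unfolding FF fst_hull image_image by simp
  moreover have "aff_dim ?F = 2" using dim FF by simp
  ultimately show ?thesis unfolding cells_def by blast
qed



lemma Pt_vals: "Pt 1 = (1,2)" "Pt 2 = (2,1)" "Pt 3 = (2,0)" "Pt 4 = (0,2)"
  "Pt 5 = (1,1)" "Pt 6 = (1,0)" "Pt 7 = (0,1)" "Pt 8 = (0,0)"
  by (simp_all add: Pt_def)

lemma in_tri: "p \<in> tri i j k \<longleftrightarrow> (\<exists>u v w. 0 \<le> u \<and> 0 \<le> v \<and> 0 \<le> w \<and> u + v + w = 1 \<and>
   p = u *\<^sub>R Pt i + v *\<^sub>R Pt j + w *\<^sub>R Pt k)"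
  unfolding tri_def convex_hull_3 by blast

lemma in_seg: "p \<in> convex hull {a, b} \<longleftrightarrow> (\<exists>u v. 0 \<le> u \<and> 0 \<le> v \<and> u + v = 1 \<and>
   p = u *\<^sub>R a + v *\<^sub>R b)"
  unfolding convex_hull_2 by blast

lemma tri_verts: "Pt i \<in> tri i j k" "Pt j \<in> tri i j k" "Pt k \<in> tri i j k"
  unfolding tri_def by (auto intro: hull_inc)

lemma tri_cell:
  assumes "tri i j l \<in> cells val c"
   and mem: "\<forall>k\<in>supp c. Pt k \<in> tri i j l \<longrightarrow> k \<in> {i,j,l}"
   and ni: "Pt i \<notin> convex hull {Pt j, Pt l}" and nj: "Pt j \<notin> convex hull {Pt i, Pt l}"
   and nl: "Pt l \<notin> convex hull {Pt i, Pt j}"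
  obtains a b d where "\<forall>k\<in>supp c. a * fst (Pt k) + b * snd (Pt k) + d \<le> hgt val c k"
   "{k\<in>supp c. hgt val c k = a * fst (Pt k) + b * snd (Pt k) + d} = {i,j,l}"
proof -
  obtain a b d where v: "\<forall>k\<in>supp c. a * fst (Pt k) + b * snd (Pt k) + d \<le> hgt val c k"
    and "tri i j l = fst ` {p \<in> convex hull (lifted val c). snd p = a * fst(fst p) + b * snd(fst p) + d}"
    and s: "tri i j l = convex hull (Pt ` {k\<in>supp c. hgt val c k = a * fst (Pt k) + b * snd (Pt k) + d})"
    and "aff_dim (convex hull ((\<lambda>k. (Pt k, hgt val c k)) ` {k\<in>supp c. hgt val c k = a * fst (Pt k) + b * snd (Pt k) + d})) = 2"
    by (rule cell_char[OF assms(1)])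
  define ON where "ON = {k\<in>supp c. hgt val c k = a * fst (Pt k) + b * snd (Pt k) + d}"
  have s': "tri i j l = convex hull (Pt ` ON)" using s unfolding ON_def .
  have sub: "ON \<subseteq> {i,j,l}"
  proof
    fix k assume k: "k \<in> ON"
    then have "Pt k \<in> tri i j l" unfolding s' by (intro hull_inc imageI)
    moreover have "k \<in> supp c" using k unfolding ON_def by blast
    ultimately show "k \<in> {i,j,l}" using mem by blast
  qed
  have gen: "x \<in> ON" if "Pt x \<notin> convex hull {Pt y, Pt z}" "Pt x \<in> tri i j l" "ON \<subseteq> {x,y,z}" for x y z
  proof (rule ccontr)
    assume "x \<notin> ON"
    then have "ON \<subseteq> {y,z}" using that(3) by auto
    then have "Pt ` ON \<subseteq> {Pt y, Pt z}" by auto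
    then have "convex hull (Pt ` ON) \<subseteq> convex hull {Pt y, Pt z}" by (rule hull_mono)
    then show False using that(1,2) s' by auto
  qed
  have "i \<in> ON" by (rule gen[OF ni tri_verts(1)]) (use sub in auto)
  moreover have "j \<in> ON" by (rule gen[OF nj tri_verts(2)]) (use sub in auto)
  moreover have "l \<in> ON" by (rule gen[OF nl tri_verts(3)]) (use sub in auto)
  ultimately have "ON = {i,j,l}" using sub by auto
  then show ?thesis by (rule that[OF v, folded ON_def])
qed


lemma trop_eqI:
  assumes "k0 \<in> supp c" "\<forall>k\<in>supp c. trop_term val c k0 x \<le> trop_term val c k x"
  shows "trop val c x = trop_term val c k0 x"
  unfolding trop_def
  by (rule Min_eqI) (use assms finite_supp in auto)

lemma dual_tri:
  assumes mem: "\<forall>k\<in>supp c. Pt k \<in> \<sigma> \<longleftrightarrow> k \<in> {i,j,l}" and ins: "i \<in> supp c" "j \<in> supp c" "l \<in> supp c"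
  and eqs: "trop_term val c j x0 = trop_term val c i x0" "trop_term val c l x0 = trop_term val c i x0"
  and mn: "\<forall>k\<in>supp c. trop_term val c i x0 \<le> trop_term val c k x0"
  and uniq: "\<And>x. trop_term val c i x = trop_term val c j x \<Longrightarrow> trop_term val c i x = trop_term val c l x \<Longrightarrow> x = x0"
  shows "dual_vertex val c \<sigma> = x0"
  unfolding dual_vertex_def
proof (rule the_equality)
  have t: "trop val c x0 = trop_term val c i x0" by (rule trop_eqI[OF ins(1) mn])
  show "\<forall>k\<in>supp c. Pt k \<in> \<sigma> \<longrightarrow> trop_term val c k x0 = trop val c x0"
    using mem eqs t by auto
next
  fix x assume "\<forall>k\<in>supp c. Pt k \<in> \<sigma> \<longrightarrow> trop_term val c k x = trop val c x"
  then have "trop_term val c i x = trop val c x" "trop_term val c j x = trop val c x" "trop_term val c l x = trop val c x"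
    using mem ins by auto
  then show "x = x0" using uniq by simp
qed



lemma ll_x:
  assumes "q - p = (t, 0)" shows "lattice_length p q = \<bar>t\<bar>"
  unfolding lattice_length_def
proof (rule the_equality)
  show "\<bar>t\<bar> \<ge> 0 \<and> (\<exists>w. primitive_vec w \<and> q - p = (\<bar>t\<bar> * of_int (fst w), \<bar>t\<bar> * of_int (snd w)))"
    using assms by (intro conjI exI[of _ "(if t < 0 then -1 else 1, 0) :: int \<times> int"]) (auto simp: primitive_vec_def)
next
  fix l' :: real
  assume "l' \<ge> 0 \<and> (\<exists>w. primitive_vec w \<and> q - p = (l' * of_int (fst w), l' * of_int (snd w)))"
  then obtain w1 w2 where l': "l' \<ge> 0" "primitive_vec (w1,w2)" "q - p = (l' * of_int w1, l' * of_int w2)"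
    by auto
  have e: "l' * of_int w1 = t" "l' * of_int w2 = 0" using l' assms by auto
  show "l' = \<bar>t\<bar>"
  proof (cases "l' = 0")
    case True then show ?thesis using e by simp
  next
    case False
    then have "w2 = 0" using e by simp
    then have "\<bar>w1\<bar> = 1" using l'(2) by (simp add: primitive_vec_def)
    then have "\<bar>real_of_int w1\<bar> = 1" by (metis of_int_1 of_int_abs)
    then show ?thesis using e l'(1) by (metis abs_mult abs_of_nonneg mult.right_neutral)
  qed
qed
lemma ll_y:
  assumes "q - p = (0, t)" shows "lattice_length p q = \<bar>t\<bar>"
  unfolding lattice_length_def
proof (rule the_equality)
  show "\<bar>t\<bar> \<ge> 0 \<and> (\<exists>w. primitive_vec w \<and> q - p = (\<bar>t\<bar> * of_int (fst w), \<bar>t\<bar> * of_int (snd w)))"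
    using assms by (intro conjI exI[of _ "(0, if t < 0 then -1 else 1) :: int \<times> int"]) (auto simp: primitive_vec_def)
next
  fix l' :: real
  assume "l' \<ge> 0 \<and> (\<exists>w. primitive_vec w \<and> q - p = (l' * of_int (fst w), l' * of_int (snd w)))"
  then obtain w1 w2 where l': "l' \<ge> 0" "primitive_vec (w1,w2)" "q - p = (l' * of_int w1, l' * of_int w2)"
    by auto
  have e: "l' * of_int w2 = t" "l' * of_int w1 = 0" using l' assms by auto
  show "l' = \<bar>t\<bar>"
  proof (cases "l' = 0")
    case True then show ?thesis using e by simp
  next
    case False
    then have "w1 = 0" using e by simp
    then have "\<bar>w2\<bar> = 1" using l'(2) by (simp add: primitive_vec_def)
    then have "\<bar>real_of_int w2\<bar> = 1" by (metis of_int_1 of_int_abs)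
    then show ?thesis using e l'(1) by (metis abs_mult abs_of_nonneg mult.right_neutral)
  qed
qed
lemma ll_d:
  assumes "q - p = (t, t)" shows "lattice_length p q = \<bar>t\<bar>"
  unfolding lattice_length_def
proof (rule the_equality)
  show "\<bar>t\<bar> \<ge> 0 \<and> (\<exists>w. primitive_vec w \<and> q - p = (\<bar>t\<bar> * of_int (fst w), \<bar>t\<bar> * of_int (snd w)))"
    using assms by (intro conjI exI[of _ "(if t < 0 then -1 else 1, if t < 0 then -1 else 1) :: int \<times> int"]) (auto simp: primitive_vec_def)
next
  fix l' :: real
  assume "l' \<ge> 0 \<and> (\<exists>w. primitive_vec w \<and> q - p = (l' * of_int (fst w), l' * of_int (snd w)))"
  then obtain w1 w2 where l': "l' \<ge> 0" "primitive_vec (w1,w2)" "q - p = (l' * of_int w1, l' * of_int w2)"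
    by auto
  have e: "l' * of_int w1 = t" "l' * of_int w2 = t" using l' assms by auto
  show "l' = \<bar>t\<bar>"
  proof (cases "l' = 0")
    case True then show ?thesis using e by simp
  next
    case False
    then have "real_of_int w1 = real_of_int w2" using e by (metis mult_left_cancel)
    then have "w1 = w2" by simp
    then have "\<bar>w1\<bar> = 1" using l'(2) by (simp add: primitive_vec_def)
    then have "\<bar>real_of_int w1\<bar> = 1" by (metis of_int_1 of_int_abs)
    then show ?thesis using e l'(1) by (metis abs_mult abs_of_nonneg mult.right_neutral)
  qed
qed


lemma seg_frontier:
  fixes S :: "(real\<times>real) set" and n :: "real\<times>real"
  assumes AB: "A\<in>S" "B\<in>S" and n: "n\<noteq>0" and le: "\<forall>p\<in>S. n \<bullet> p \<le> m" and eq: "n \<bullet> A = m" "n \<bullet> B = m"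
  shows "closed_segment A B \<subseteq> frontier (convex hull S)"
proof
  fix x assume x: "x \<in> closed_segment A B"
  have seg: "closed_segment A B = convex hull {A,B}" by (rule segment_convex_hull)
  have "convex hull {A,B} \<subseteq> convex hull S" by (rule hull_mono) (use AB in auto)
  then have cl: "x \<in> closure (convex hull S)" using x seg closure_subset by blast
  have "convex hull {A,B} \<subseteq> {p. n \<bullet> p = m}"
  proof (rule hull_minimal)
    show "convex {p. n \<bullet> p = m}" by (rule convex_hyperplane)
  qed (use eq in auto)
  then have xm: "n \<bullet> x = m" using x seg by blast
  have "convex hull S \<subseteq> {p. n \<bullet> p \<le> m}"
  proof (rule hull_minimal)
    show "convex {p. n \<bullet> p \<le> m}" by (rule convex_halfspace_le)
  qed (use le in auto)
  then have "interior (convex hull S) \<subseteq> interior {p. n \<bullet> p \<le> m}" by (rule interior_mono)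
  also have "\<dots> = {p. n \<bullet> p < m}" using n by (rule interior_halfspace_le)
  finally have "x \<notin> interior (convex hull S)" using xm by auto
  then show "x \<in> frontier (convex hull S)" using cl unfolding frontier_def by blast
qed

lemma interior_pt:
  fixes S :: "(real\<times>real) set"
  assumes "(0,0) \<in> S" "(1,0) \<in> S" "(0,1) \<in> S" "(1,1) \<in> S"
  shows "(1/2, 1/2) \<in> interior (convex hull S)"
proof -
  let ?T = "{p::real\<times>real. 0 < fst p} \<inter> {p. fst p < 1} \<inter> {p. 0 < snd p} \<inter> {p. snd p < 1}"
  have op: "open ?T"
    by (intro open_Int open_Collect_less continuous_intros)
  have sub: "?T \<subseteq> convex hull S"
  proof
    fix p :: "real\<times>real" assume p: "p \<in> ?T"
    obtain x y where xy: "p = (x,y)" by force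
    have cv: "convex (convex hull S)" by (rule convex_convex_hull)
    have h: "(0,0) \<in> convex hull S" "(1,0) \<in> convex hull S" "(0,1) \<in> convex hull S" "(1,1) \<in> convex hull S"
      using assms by (auto intro: hull_inc)
    have r: "0 \<le> x" "x \<le> 1" "0 \<le> y" "y \<le> 1" using p xy by auto
    have "(1-x) *\<^sub>R (0,0) + x *\<^sub>R (1,0) \<in> convex hull S"
      by (rule convexD[OF cv h(1) h(2)]) (use r in auto)
    then have a: "(x,0) \<in> convex hull S" by simp
    have "(1-x) *\<^sub>R (0,1) + x *\<^sub>R (1,1) \<in> convex hull S"
      by (rule convexD[OF cv h(3) h(4)]) (use r in auto)
    then have b: "(x,1) \<in> convex hull S" by simp
    have "(1-y) *\<^sub>R (x,0) + y *\<^sub>R (x,1) \<in> convex hull S"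
      by (rule convexD[OF cv a b]) (use r in auto)
    then show "p \<in> convex hull S" using xy by (simp add: algebra_simps)
  qed
  have "(1/2, 1/2) \<in> ?T" by simp
  then show ?thesis using interior_maximal[OF sub op] by blast
qed




lemma nt125_3: "Pt 3 \<notin> tri 1 2 5"
  unfolding in_tri Pt_vals by (auto simp: prod_eq_iff)

lemma nt125_4: "Pt 4 \<notin> tri 1 2 5"
  unfolding in_tri Pt_vals by (auto simp: prod_eq_iff)

lemma nt125_6: "Pt 6 \<notin> tri 1 2 5"
  unfolding in_tri Pt_vals by (auto simp: prod_eq_iff)

lemma nt125_7: "Pt 7 \<notin> tri 1 2 5"
  unfolding in_tri Pt_vals by (auto simp: prod_eq_iff)

lemma nt125_8: "Pt 8 \<notin> tri 1 2 5"
  unfolding in_tri Pt_vals by (auto simp: prod_eq_iff)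

lemma mem125: "k \<in> {1,2,3,4,5,6,7,8} \<Longrightarrow> Pt k \<in> tri 1 2 5 \<longleftrightarrow> k \<in> {1,2,5}"
  by (elim insertE emptyE; hypsubst_thin; simp only: tri_verts nt125_3 nt125_4 nt125_6 nt125_7 nt125_8 insert_iff empty_iff; simp)

lemma ns125_1: "Pt 1 \<notin> convex hull {Pt 2, Pt 5}"
  unfolding in_seg Pt_vals by (auto simp: prod_eq_iff)

lemma ns125_2: "Pt 2 \<notin> convex hull {Pt 1, Pt 5}"
  unfolding in_seg Pt_vals by (auto simp: prod_eq_iff)

lemma ns125_5: "Pt 5 \<notin> convex hull {Pt 1, Pt 2}"
  unfolding in_seg Pt_vals by (auto simp: prod_eq_iff)

lemma nt235_1: "Pt 1 \<notin> tri 2 3 5"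
  unfolding in_tri Pt_vals by (auto simp: prod_eq_iff)

lemma nt235_4: "Pt 4 \<notin> tri 2 3 5"
  unfolding in_tri Pt_vals by (auto simp: prod_eq_iff)

lemma nt235_6: "Pt 6 \<notin> tri 2 3 5"
  unfolding in_tri Pt_vals by (auto simp: prod_eq_iff)

lemma nt235_7: "Pt 7 \<notin> tri 2 3 5"
  unfolding in_tri Pt_vals by (auto simp: prod_eq_iff)

lemma nt235_8: "Pt 8 \<notin> tri 2 3 5"
  unfolding in_tri Pt_vals by (auto simp: prod_eq_iff)

lemma mem235: "k \<in> {1,2,3,4,5,6,7,8} \<Longrightarrow> Pt k \<in> tri 2 3 5 \<longleftrightarrow> k \<in> {2,3,5}"
  by (elim insertE emptyE; hypsubst_thin; simp only: tri_verts nt235_1 nt235_4 nt235_6 nt235_7 nt235_8 insert_iff empty_iff; simp)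

lemma ns235_2: "Pt 2 \<notin> convex hull {Pt 3, Pt 5}"
  unfolding in_seg Pt_vals by (auto simp: prod_eq_iff)

lemma ns235_3: "Pt 3 \<notin> convex hull {Pt 2, Pt 5}"
  unfolding in_seg Pt_vals by (auto simp: prod_eq_iff)

lemma ns235_5: "Pt 5 \<notin> convex hull {Pt 2, Pt 3}"
  unfolding in_seg Pt_vals by (auto simp: prod_eq_iff)

lemma nt356_1: "Pt 1 \<notin> tri 3 5 6"
  unfolding in_tri Pt_vals by (auto simp: prod_eq_iff)

lemma nt356_2: "Pt 2 \<notin> tri 3 5 6"
  unfolding in_tri Pt_vals by (auto simp: prod_eq_iff)

lemma nt356_4: "Pt 4 \<notin> tri 3 5 6"
  unfolding in_tri Pt_vals by (auto simp: prod_eq_iff)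

lemma nt356_7: "Pt 7 \<notin> tri 3 5 6"
  unfolding in_tri Pt_vals by (auto simp: prod_eq_iff)

lemma nt356_8: "Pt 8 \<notin> tri 3 5 6"
  unfolding in_tri Pt_vals by (auto simp: prod_eq_iff)

lemma mem356: "k \<in> {1,2,3,4,5,6,7,8} \<Longrightarrow> Pt k \<in> tri 3 5 6 \<longleftrightarrow> k \<in> {3,5,6}"
  by (elim insertE emptyE; hypsubst_thin; simp only: tri_verts nt356_1 nt356_2 nt356_4 nt356_7 nt356_8 insert_iff empty_iff; simp)

lemma ns356_3: "Pt 3 \<notin> convex hull {Pt 5, Pt 6}"
  unfolding in_seg Pt_vals by (auto simp: prod_eq_iff)

lemma ns356_5: "Pt 5 \<notin> convex hull {Pt 3, Pt 6}"
  unfolding in_seg Pt_vals by (auto simp: prod_eq_iff)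

lemma ns356_6: "Pt 6 \<notin> convex hull {Pt 3, Pt 5}"
  unfolding in_seg Pt_vals by (auto simp: prod_eq_iff)

lemma nt567_1: "Pt 1 \<notin> tri 5 6 7"
  unfolding in_tri Pt_vals by (auto simp: prod_eq_iff)

lemma nt567_2: "Pt 2 \<notin> tri 5 6 7"
  unfolding in_tri Pt_vals by (auto simp: prod_eq_iff)

lemma nt567_3: "Pt 3 \<notin> tri 5 6 7"
  unfolding in_tri Pt_vals by (auto simp: prod_eq_iff)

lemma nt567_4: "Pt 4 \<notin> tri 5 6 7"
  unfolding in_tri Pt_vals by (auto simp: prod_eq_iff)

lemma nt567_8: "Pt 8 \<notin> tri 5 6 7"
  unfolding in_tri Pt_vals by (auto simp: prod_eq_iff)

lemma mem567: "k \<in> {1,2,3,4,5,6,7,8} \<Longrightarrow> Pt k \<in> tri 5 6 7 \<longleftrightarrow> k \<in> {5,6,7}"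
  by (elim insertE emptyE; hypsubst_thin; simp only: tri_verts nt567_1 nt567_2 nt567_3 nt567_4 nt567_8 insert_iff empty_iff; simp)

lemma ns567_5: "Pt 5 \<notin> convex hull {Pt 6, Pt 7}"
  unfolding in_seg Pt_vals by (auto simp: prod_eq_iff)

lemma ns567_6: "Pt 6 \<notin> convex hull {Pt 5, Pt 7}"
  unfolding in_seg Pt_vals by (auto simp: prod_eq_iff)

lemma ns567_7: "Pt 7 \<notin> convex hull {Pt 5, Pt 6}"
  unfolding in_seg Pt_vals by (auto simp: prod_eq_iff)

lemma nt457_1: "Pt 1 \<notin> tri 4 5 7"
  unfolding in_tri Pt_vals by (auto simp: prod_eq_iff)

lemma nt457_2: "Pt 2 \<notin> tri 4 5 7"
  unfolding in_tri Pt_vals by (auto simp: prod_eq_iff)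

lemma nt457_3: "Pt 3 \<notin> tri 4 5 7"
  unfolding in_tri Pt_vals by (auto simp: prod_eq_iff)

lemma nt457_6: "Pt 6 \<notin> tri 4 5 7"
  unfolding in_tri Pt_vals by (auto simp: prod_eq_iff)

lemma nt457_8: "Pt 8 \<notin> tri 4 5 7"
  unfolding in_tri Pt_vals by (auto simp: prod_eq_iff)

lemma mem457: "k \<in> {1,2,3,4,5,6,7,8} \<Longrightarrow> Pt k \<in> tri 4 5 7 \<longleftrightarrow> k \<in> {4,5,7}"
  by (elim insertE emptyE; hypsubst_thin; simp only: tri_verts nt457_1 nt457_2 nt457_3 nt457_6 nt457_8 insert_iff empty_iff; simp)

lemma ns457_4: "Pt 4 \<notin> convex hull {Pt 5, Pt 7}"
  unfolding in_seg Pt_vals by (auto simp: prod_eq_iff)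

lemma ns457_5: "Pt 5 \<notin> convex hull {Pt 4, Pt 7}"
  unfolding in_seg Pt_vals by (auto simp: prod_eq_iff)

lemma ns457_7: "Pt 7 \<notin> convex hull {Pt 4, Pt 5}"
  unfolding in_seg Pt_vals by (auto simp: prod_eq_iff)

lemma nt145_2: "Pt 2 \<notin> tri 1 4 5"
  unfolding in_tri Pt_vals by (auto simp: prod_eq_iff)

lemma nt145_3: "Pt 3 \<notin> tri 1 4 5"
  unfolding in_tri Pt_vals by (auto simp: prod_eq_iff)

lemma nt145_6: "Pt 6 \<notin> tri 1 4 5"
  unfolding in_tri Pt_vals by (auto simp: prod_eq_iff)

lemma nt145_7: "Pt 7 \<notin> tri 1 4 5"
  unfolding in_tri Pt_vals by (auto simp: prod_eq_iff)

lemma nt145_8: "Pt 8 \<notin> tri 1 4 5"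
  unfolding in_tri Pt_vals by (auto simp: prod_eq_iff)

lemma mem145: "k \<in> {1,2,3,4,5,6,7,8} \<Longrightarrow> Pt k \<in> tri 1 4 5 \<longleftrightarrow> k \<in> {1,4,5}"
  by (elim insertE emptyE; hypsubst_thin; simp only: tri_verts nt145_2 nt145_3 nt145_6 nt145_7 nt145_8 insert_iff empty_iff; simp)

lemma ns145_1: "Pt 1 \<notin> convex hull {Pt 4, Pt 5}"
  unfolding in_seg Pt_vals by (auto simp: prod_eq_iff)

lemma ns145_4: "Pt 4 \<notin> convex hull {Pt 1, Pt 5}"
  unfolding in_seg Pt_vals by (auto simp: prod_eq_iff)

lemma ns145_5: "Pt 5 \<notin> convex hull {Pt 1, Pt 4}"
  unfolding in_seg Pt_vals by (auto simp: prod_eq_iff)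

lemma nt678_1: "Pt 1 \<notin> tri 6 7 8"
  unfolding in_tri Pt_vals by (auto simp: prod_eq_iff)

lemma nt678_2: "Pt 2 \<notin> tri 6 7 8"
  unfolding in_tri Pt_vals by (auto simp: prod_eq_iff)

lemma nt678_3: "Pt 3 \<notin> tri 6 7 8"
  unfolding in_tri Pt_vals by (auto simp: prod_eq_iff)

lemma nt678_4: "Pt 4 \<notin> tri 6 7 8"
  unfolding in_tri Pt_vals by (auto simp: prod_eq_iff)

lemma nt678_5: "Pt 5 \<notin> tri 6 7 8"
  unfolding in_tri Pt_vals by (auto simp: prod_eq_iff)

lemma mem678: "k \<in> {1,2,3,4,5,6,7,8} \<Longrightarrow> Pt k \<in> tri 6 7 8 \<longleftrightarrow> k \<in> {6,7,8}"
  by (elim insertE emptyE; hypsubst_thin; simp only: tri_verts nt678_1 nt678_2 nt678_3 nt678_4 nt678_5 insert_iff empty_iff; simp)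

lemma ns678_6: "Pt 6 \<notin> convex hull {Pt 7, Pt 8}"
  unfolding in_seg Pt_vals by (auto simp: prod_eq_iff)

lemma ns678_7: "Pt 7 \<notin> convex hull {Pt 6, Pt 8}"
  unfolding in_seg Pt_vals by (auto simp: prod_eq_iff)

lemma ns678_8: "Pt 8 \<notin> convex hull {Pt 6, Pt 7}"
  unfolding in_seg Pt_vals by (auto simp: prod_eq_iff)


lemma strict_of:
  assumes "\<forall>k\<in>S. F k \<le> (H k::real)" "{k\<in>S. H k = F k} = T"
  shows "\<forall>k\<in>S. (k\<in>T \<longrightarrow> H k = F k) \<and> (k \<notin> T \<longrightarrow> F k < H k)"
  using assms by force



lemma strict_to:
  assumes "\<forall>k\<in>S. (k\<in>T \<longrightarrow> H k = F k) \<and> (k \<notin> T \<longrightarrow> F k < (H k::real))" "T \<subseteq> S"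
  shows "\<forall>k\<in>S. F k \<le> H k" "{k\<in>S. H k = F k} = T"
  using assms by force+

lemma aff3:
  fixes x y z :: "(real\<times>real)\<times>real"
  assumes "\<not> collinear {x,y,z}"
  shows "aff_dim (convex hull {x,y,z}) = 2"
proof -
  have d: "x \<noteq> y" "x \<noteq> z" "y \<noteq> z" using assms collinear_2 by (auto simp: insert_commute)
  have "\<not> affine_dependent {x,y,z}" using collinear_3_eq_affine_dependent assms by blast
  then have "of_nat (card {x,y,z}) = aff_dim {x,y,z} + 1" by (rule aff_dim_affine_independent)
  then show ?thesis using d by (simp add: aff_dim_convex_hull)
qed

theorem proposition5p3:
  fixes val :: "'a::field \<Rightarrow> ereal"
    and c12 c34 c5 c67 c8 :: 'a
    and v12 v34 v5 v67 :: real and v8 :: ereal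
  assumes "is_valuation val"
    and "c12 \<noteq> 0" and "c34 \<noteq> 0" and "c5 \<noteq> 0" and "c67 \<noteq> 0"
    and "val c12 = ereal v12" and "val c34 = ereal v34" and "val c5 = ereal v5"
    and "val c67 = ereal v67" and "val c8 = v8"
    and "truncated_honeycomb val (coefs c12 c34 c5 c67 c8)"
  shows "(quasi_symmetric val (coefs c12 c34 c5 c67 c8) \<longleftrightarrow>
            2 * v34 = v12 + v67 \<and> ereal (- v5 + 2 * v67) < v8)
       \<and> (quasi_symmetric val (coefs c12 c34 c5 c67 c8) \<longrightarrow>
            (\<forall>l \<in> set (hex_side_lengths val (coefs c12 c34 c5 c67 c8)). l = \<bar>v34 - v5\<bar>)
          \<and> (c8 \<noteq> 0 \<longrightarrow>
              (\<exists>\<sigma> \<in> cells val (coefs c12 c34 c5 c67 c8).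
                  Pt 6 \<in> \<sigma> \<and> Pt 7 \<in> \<sigma> \<and> \<sigma> \<noteq> tri 5 6 7)
            \<and> (\<forall>\<sigma> \<in> cells val (coefs c12 c34 c5 c67 c8).
                  Pt 6 \<in> \<sigma> \<and> Pt 7 \<in> \<sigma> \<and> \<sigma> \<noteq> tri 5 6 7 \<longrightarrow>
                  lattice_length (dual_vertex val (coefs c12 c34 c5 c67 c8) (tri 5 6 7))
                                 (dual_vertex val (coefs c12 c34 c5 c67 c8) \<sigma>)
                    = \<bar>v5 - 2 * v67 + real_of_ereal v8\<bar>)))
       \<and> (symmetric_curve val (coefs c12 c34 c5 c67 c8) \<longleftrightarrow>
            2 * v34 = v12 + v67 \<and> v8 = \<infinity>)"
proof -
  define c where "c = coefs c12 c34 c5 c67 c8"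
  define r8 where "r8 = real_of_ereal v8"
  have val: "is_valuation val" by fact
  have c_vals: "c 1 = c12" "c 2 = c12" "c 3 = c34" "c 4 = c34" "c 5 = c5" "c 6 = c67" "c 7 = c67" "c 8 = c8"
    by (simp_all add: c_def coefs_def)
  have k8: "k \<in> {1..8} \<longleftrightarrow> k \<in> {1,2,3,4,5,6,7,8}" for k :: nat by auto
  have supp: "supp c = {1,2,3,4,5,6,7} \<union> (if c8 = 0 then {} else {8})"
    unfolding supp_def k8 using c_vals assms(2-5) by auto
  have supp8: "supp c \<subseteq> {1,2,3,4,5,6,7,8}" unfolding supp by auto
  have s17: "{1,2,3,4,5,6,7} \<subseteq> supp c" unfolding supp by auto
  have h: "hgt val c 1 = v12" "hgt val c 2 = v12" "hgt val c 3 = v34" "hgt val c 4 = v34"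
    "hgt val c 5 = v5" "hgt val c 6 = v67" "hgt val c 7 = v67" "hgt val c 8 = r8"
    unfolding hgt_def c_vals by (simp_all add: assms r8_def)
  note hh = h h(1)[unfolded One_nat_def] Pt_vals Pt_vals(1)[unfolded One_nat_def]
  have v8inf: "c8 = 0 \<longleftrightarrow> v8 = \<infinity>" using val assms(10) unfolding is_valuation_def by auto
  have v8fin: "v8 = ereal r8" if "c8 \<noteq> 0"
  proof -
    have "v8 \<noteq> \<infinity>" "v8 \<noteq> -\<infinity>" using that v8inf val assms(10) unfolding is_valuation_def by auto
    then show ?thesis unfolding r8_def by (cases v8) auto
  qed
  have hc: "tri 1 2 5 \<in> cells val c" "tri 2 3 5 \<in> cells val c" "tri 5 6 7 \<in> cells val c"
    using assms(11) unfolding c_def[symmetric] truncated_honeycomb_def hex_cells_def by auto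
  have memf:
    "\<forall>k\<in>supp c. Pt k \<in> tri 1 2 5 \<longleftrightarrow> k \<in> {1,2,5}"
    "\<forall>k\<in>supp c. Pt k \<in> tri 2 3 5 \<longleftrightarrow> k \<in> {2,3,5}"
    "\<forall>k\<in>supp c. Pt k \<in> tri 3 5 6 \<longleftrightarrow> k \<in> {3,5,6}"
    "\<forall>k\<in>supp c. Pt k \<in> tri 5 6 7 \<longleftrightarrow> k \<in> {5,6,7}"
    "\<forall>k\<in>supp c. Pt k \<in> tri 4 5 7 \<longleftrightarrow> k \<in> {4,5,7}"
    "\<forall>k\<in>supp c. Pt k \<in> tri 1 4 5 \<longleftrightarrow> k \<in> {1,4,5}"
    "\<forall>k\<in>supp c. Pt k \<in> tri 6 7 8 \<longleftrightarrow> k \<in> {6,7,8}"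
    by (intro ballI mem125 mem235 mem356 mem567 mem457 mem145 mem678; use supp8 in blast)+
  obtain a1 b1 d1 where v1: "\<forall>k\<in>supp c. a1 * fst (Pt k) + b1 * snd (Pt k) + d1 \<le> hgt val c k"
    and o1: "{k\<in>supp c. hgt val c k = a1 * fst (Pt k) + b1 * snd (Pt k) + d1} = {1,2,5}"
    by (rule tri_cell[OF hc(1)]) (use memf(1) ns125_1 ns125_2 ns125_5 in auto)
  note s1 = strict_of[OF v1 o1]
  have I1: "v34 > v5"
    using bspec[OF s1, of 1] bspec[OF s1, of 2] bspec[OF s1, of 5] bspec[OF s1, of 3] s17
    by (simp add: hh)
  obtain a2 b2 d2 where v2: "\<forall>k\<in>supp c. a2 * fst (Pt k) + b2 * snd (Pt k) + d2 \<le> hgt val c k"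
    and o2: "{k\<in>supp c. hgt val c k = a2 * fst (Pt k) + b2 * snd (Pt k) + d2} = {2,3,5}"
    by (rule tri_cell[OF hc(2)]) (use memf(2) ns235_2 ns235_3 ns235_5 in auto)
  note s2 = strict_of[OF v2 o2]
  have I2: "v34 + v5 < v12 + v67"
    using bspec[OF s2, of 2] bspec[OF s2, of 3] bspec[OF s2, of 5] bspec[OF s2, of 6] s17
    by (simp add: hh)
  obtain a3 b3 d3 where v3: "\<forall>k\<in>supp c. a3 * fst (Pt k) + b3 * snd (Pt k) + d3 \<le> hgt val c k"
    and o3: "{k\<in>supp c. hgt val c k = a3 * fst (Pt k) + b3 * snd (Pt k) + d3} = {5,6,7}"
    by (rule tri_cell[OF hc(3)]) (use memf(4) ns567_5 ns567_6 ns567_7 in auto)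
  note s3 = strict_of[OF v3 o3]
  have I3: "2 * v67 - v5 < r8" if "c8 \<noteq> 0"
    using bspec[OF s3, of 5] bspec[OF s3, of 6] bspec[OF s3, of 7] bspec[OF s3, of 8] s17 that
    by (simp add: hh supp)
  have supp_cases: "\<forall>k\<in>supp c. P k" if "P 1" "P 2" "P 3" "P 4" "P 5" "P 6" "P 7" "c8 \<noteq> 0 \<Longrightarrow> P 8" for P
    using that unfolding supp by (auto split: if_splits)
  have dv125: "dual_vertex val c (tri 1 2 5) = (v5 - v12, v5 - v12)"
  proof (rule dual_tri[OF memf(1)])
    show "1 \<in> supp c" "2 \<in> supp c" "5 \<in> supp c" using s17 by auto
    show "trop_term val c 2 (v5 - v12, v5 - v12) = trop_term val c 1 (v5 - v12, v5 - v12)"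
      "trop_term val c 5 (v5 - v12, v5 - v12) = trop_term val c 1 (v5 - v12, v5 - v12)"
      by (simp_all add: trop_term_def hh)
    show "\<forall>k\<in>supp c. trop_term val c 1 (v5 - v12, v5 - v12) \<le> trop_term val c k (v5 - v12, v5 - v12)"
      by (rule supp_cases; (simp add: trop_term_def hh)?; insert I1 I2; (frule I3)?; linarith)
    fix x assume "trop_term val c 1 x = trop_term val c 2 x" "trop_term val c 1 x = trop_term val c 5 x"
    then show "x = (v5 - v12, v5 - v12)" by (simp add: trop_term_def hh prod_eq_iff; linarith?)
  qed
  have dv235: "dual_vertex val c (tri 2 3 5) = (v5 - v12, v34 - v12)"
  proof (rule dual_tri[OF memf(2)])
    show "2 \<in> supp c" "3 \<in> supp c" "5 \<in> supp c" using s17 by auto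
    show "trop_term val c 3 (v5 - v12, v34 - v12) = trop_term val c 2 (v5 - v12, v34 - v12)"
      "trop_term val c 5 (v5 - v12, v34 - v12) = trop_term val c 2 (v5 - v12, v34 - v12)"
      by (simp_all add: trop_term_def hh)
    show "\<forall>k\<in>supp c. trop_term val c 2 (v5 - v12, v34 - v12) \<le> trop_term val c k (v5 - v12, v34 - v12)"
      by (rule supp_cases; (simp add: trop_term_def hh)?; insert I1 I2; (frule I3)?; linarith)
    fix x assume "trop_term val c 2 x = trop_term val c 3 x" "trop_term val c 2 x = trop_term val c 5 x"
    then show "x = (v5 - v12, v34 - v12)" by (simp add: trop_term_def hh prod_eq_iff; linarith?)
  qed
  have dv356: "dual_vertex val c (tri 3 5 6) = (v67 - v34, v67 - v5)"
  proof (rule dual_tri[OF memf(3)])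
    show "3 \<in> supp c" "5 \<in> supp c" "6 \<in> supp c" using s17 by auto
    show "trop_term val c 5 (v67 - v34, v67 - v5) = trop_term val c 3 (v67 - v34, v67 - v5)"
      "trop_term val c 6 (v67 - v34, v67 - v5) = trop_term val c 3 (v67 - v34, v67 - v5)"
      by (simp_all add: trop_term_def hh)
    show "\<forall>k\<in>supp c. trop_term val c 3 (v67 - v34, v67 - v5) \<le> trop_term val c k (v67 - v34, v67 - v5)"
      by (rule supp_cases; (simp add: trop_term_def hh)?; insert I1 I2; (frule I3)?; linarith)
    fix x assume "trop_term val c 3 x = trop_term val c 5 x" "trop_term val c 3 x = trop_term val c 6 x"
    then show "x = (v67 - v34, v67 - v5)" by (simp add: trop_term_def hh prod_eq_iff; linarith?)
  qed
  have dv567: "dual_vertex val c (tri 5 6 7) = (v67 - v5, v67 - v5)"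
  proof (rule dual_tri[OF memf(4)])
    show "5 \<in> supp c" "6 \<in> supp c" "7 \<in> supp c" using s17 by auto
    show "trop_term val c 6 (v67 - v5, v67 - v5) = trop_term val c 5 (v67 - v5, v67 - v5)"
      "trop_term val c 7 (v67 - v5, v67 - v5) = trop_term val c 5 (v67 - v5, v67 - v5)"
      by (simp_all add: trop_term_def hh)
    show "\<forall>k\<in>supp c. trop_term val c 5 (v67 - v5, v67 - v5) \<le> trop_term val c k (v67 - v5, v67 - v5)"
      by (rule supp_cases; (simp add: trop_term_def hh)?; insert I1 I2; (frule I3)?; linarith)
    fix x assume "trop_term val c 5 x = trop_term val c 6 x" "trop_term val c 5 x = trop_term val c 7 x"
    then show "x = (v67 - v5, v67 - v5)" by (simp add: trop_term_def hh prod_eq_iff; linarith?)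
  qed
  have dv457: "dual_vertex val c (tri 4 5 7) = (v67 - v5, v67 - v34)"
  proof (rule dual_tri[OF memf(5)])
    show "4 \<in> supp c" "5 \<in> supp c" "7 \<in> supp c" using s17 by auto
    show "trop_term val c 5 (v67 - v5, v67 - v34) = trop_term val c 4 (v67 - v5, v67 - v34)"
      "trop_term val c 7 (v67 - v5, v67 - v34) = trop_term val c 4 (v67 - v5, v67 - v34)"
      by (simp_all add: trop_term_def hh)
    show "\<forall>k\<in>supp c. trop_term val c 4 (v67 - v5, v67 - v34) \<le> trop_term val c k (v67 - v5, v67 - v34)"
      by (rule supp_cases; (simp add: trop_term_def hh)?; insert I1 I2; (frule I3)?; linarith)
    fix x assume "trop_term val c 4 x = trop_term val c 5 x" "trop_term val c 4 x = trop_term val c 7 x"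
    then show "x = (v67 - v5, v67 - v34)" by (simp add: trop_term_def hh prod_eq_iff; linarith?)
  qed
  have dv145: "dual_vertex val c (tri 1 4 5) = (v34 - v12, v5 - v12)"
  proof (rule dual_tri[OF memf(6)])
    show "1 \<in> supp c" "4 \<in> supp c" "5 \<in> supp c" using s17 by auto
    show "trop_term val c 4 (v34 - v12, v5 - v12) = trop_term val c 1 (v34 - v12, v5 - v12)"
      "trop_term val c 5 (v34 - v12, v5 - v12) = trop_term val c 1 (v34 - v12, v5 - v12)"
      by (simp_all add: trop_term_def hh)
    show "\<forall>k\<in>supp c. trop_term val c 1 (v34 - v12, v5 - v12) \<le> trop_term val c k (v34 - v12, v5 - v12)"
      by (rule supp_cases; (simp add: trop_term_def hh)?; insert I1 I2; (frule I3)?; linarith)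
    fix x assume "trop_term val c 1 x = trop_term val c 4 x" "trop_term val c 1 x = trop_term val c 5 x"
    then show "x = (v34 - v12, v5 - v12)" by (simp add: trop_term_def hh prod_eq_iff; linarith?)
  qed
  have L: "lattice_length (v5 - v12, v5 - v12) (v5 - v12, v34 - v12) = \<bar>v34 - v5\<bar>"
    "lattice_length (v5 - v12, v34 - v12) (v67 - v34, v67 - v5) = \<bar>v12 + v67 - v34 - v5\<bar>"
    "lattice_length (v67 - v34, v67 - v5) (v67 - v5, v67 - v5) = \<bar>v34 - v5\<bar>"
    "lattice_length (v67 - v5, v67 - v5) (v67 - v5, v67 - v34) = \<bar>v5 - v34\<bar>"
    "lattice_length (v67 - v5, v67 - v34) (v34 - v12, v5 - v12) = \<bar>v34 + v5 - v12 - v67\<bar>"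
    "lattice_length (v34 - v12, v5 - v12) (v5 - v12, v5 - v12) = \<bar>v5 - v34\<bar>"
    by (rule ll_y ll_d ll_x; simp)+
  have hsl: "hex_side_lengths val c = [\<bar>v34 - v5\<bar>, \<bar>v12 + v67 - v34 - v5\<bar>, \<bar>v34 - v5\<bar>,
      \<bar>v5 - v34\<bar>, \<bar>v34 + v5 - v12 - v67\<bar>, \<bar>v5 - v34\<bar>]"
    unfolding hex_side_lengths_def hex_cells_def by (simp add: upt_rec L dv125 dv235 dv356 dv567 dv457 dv145 dv125[unfolded One_nat_def] dv145[unfolded One_nat_def])
  have qs: "quasi_symmetric val c \<longleftrightarrow> 2 * v34 = v12 + v67"
    unfolding quasi_symmetric_def hsl using I1 I2 by auto
  have qsl: "quasi_symmetric val c \<Longrightarrow> (\<forall>l \<in> set (hex_side_lengths val c). l = \<bar>v34 - v5\<bar>)"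
    unfolding qs hsl using I1 I2 by auto
  have ex678: "tri 6 7 8 \<in> cells val c" if c8: "c8 \<noteq> 0"
  proof -
    have sc: "\<forall>k\<in>supp c. (k \<in> {6,7,8} \<longrightarrow> hgt val c k = (v67-r8) * fst (Pt k) + (v67-r8) * snd (Pt k) + r8)
       \<and> (k \<notin> {6,7,8} \<longrightarrow> (v67-r8) * fst (Pt k) + (v67-r8) * snd (Pt k) + r8 < hgt val c k)"
      by (rule supp_cases; simp add: hh; insert I1 I2 I3[OF c8]; linarith?)
    have sub: "{6,7,8} \<subseteq> supp c" using c8 supp by auto
    note st = strict_to[OF sc sub]
    have ad: "aff_dim (convex hull {((1::real,0::real),v67), ((0::real,1::real),v67), ((0::real,0::real),r8)}) = 2"
      by (rule aff3) (simp add: collinear_3 collinear_lemma prod_eq_iff)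
    have "convex hull (Pt ` {k\<in>supp c. hgt val c k = (v67-r8) * fst (Pt k) + (v67-r8) * snd (Pt k) + r8}) \<in> cells val c"
    proof (rule cell_intro[OF st(1)])
      show "aff_dim (convex hull ((\<lambda>k. (Pt k, hgt val c k)) ` {k\<in>supp c. hgt val c k = (v67-r8) * fst (Pt k) + (v67-r8) * snd (Pt k) + r8})) = 2"
        unfolding st(2) using ad by (simp add: hh)
    qed
    then show ?thesis unfolding st(2) tri_def by simp
  qed
  have dv678: "dual_vertex val c (tri 6 7 8) = (r8 - v67, r8 - v67)" if c8: "c8 \<noteq> 0"
  proof (rule dual_tri[OF memf(7)])
    show "6 \<in> supp c" "7 \<in> supp c" "8 \<in> supp c" using s17 c8 supp by auto
    show "trop_term val c 7 (r8 - v67, r8 - v67) = trop_term val c 6 (r8 - v67, r8 - v67)"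
      "trop_term val c 8 (r8 - v67, r8 - v67) = trop_term val c 6 (r8 - v67, r8 - v67)"
      by (simp_all add: trop_term_def hh)
    show "\<forall>k\<in>supp c. trop_term val c 6 (r8 - v67, r8 - v67) \<le> trop_term val c k (r8 - v67, r8 - v67)"
      by (rule supp_cases; (simp add: trop_term_def hh)?; insert I1 I2 I3[OF c8]; linarith)
    fix x assume "trop_term val c 6 x = trop_term val c 7 x" "trop_term val c 6 x = trop_term val c 8 x"
    then show "x = (r8 - v67, r8 - v67)" by (simp add: trop_term_def hh prod_eq_iff; linarith?)
  qed
  have allp: "lattice_length (dual_vertex val c (tri 5 6 7)) (dual_vertex val c \<sigma>) = \<bar>v5 - 2 * v67 + r8\<bar>"
    if c8: "c8 \<noteq> 0" and \<sigma>: "\<sigma> \<in> cells val c" "Pt 6 \<in> \<sigma>" "Pt 7 \<in> \<sigma>" "\<sigma> \<noteq> tri 5 6 7" for \<sigma>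
  proof -
    obtain a b d where v: "\<forall>k\<in>supp c. a * fst (Pt k) + b * snd (Pt k) + d \<le> hgt val c k"
      and F: "\<sigma> = fst ` {p \<in> convex hull (lifted val c). snd p = a * fst(fst p) + b * snd(fst p) + d}"
      and s: "\<sigma> = convex hull (Pt ` {k\<in>supp c. hgt val c k = a * fst (Pt k) + b * snd (Pt k) + d})"
      and ad: "aff_dim (convex hull ((\<lambda>k. (Pt k, hgt val c k)) ` {k\<in>supp c. hgt val c k = a * fst (Pt k) + b * snd (Pt k) + d})) = 2"
      by (rule cell_char[OF \<sigma>(1)])
    define ON where "ON = {k\<in>supp c. hgt val c k = a * fst (Pt k) + b * snd (Pt k) + d}"
    have vpsik: "\<forall>k\<in>supp c. (v5-v67) * fst (Pt k) + (v5-v67) * snd (Pt k) + (2 * v67-v5) \<le> hgt val c k"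
      by (rule supp_cases; (simp add: hh)?; insert I1 I2 I3[OF c8]; linarith)
    have vpsi: "\<forall>y\<in>lifted val c. (v5-v67) * fst (fst y) + (v5-v67) * snd (fst y) + (2 * v67-v5) \<le> snd y"
      using vpsik unfolding lifted_def by auto
    note hp = hull_above[OF vpsi]
    have low: "a * fst P + b * snd P + d \<ge> (v5-v67) * fst P + (v5-v67) * snd P + (2 * v67-v5)" if P: "P \<in> \<sigma>" for P
    proof -
      have "P \<in> fst ` {p \<in> convex hull (lifted val c). snd p = a * fst(fst p) + b * snd(fst p) + d}"
        using P F by simp
      then obtain p where p: "p \<in> convex hull (lifted val c)" "snd p = a * fst(fst p) + b * snd(fst p) + d" "P = fst p"
        by blast
      show ?thesis using hp p by auto
    qed
    have e6: "a + d = v67" using low[OF \<sigma>(2)] bspec[OF v, of 6] s17 by (simp add: hh)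
    have e7: "b + d = v67" using low[OF \<sigma>(3)] bspec[OF v, of 7] s17 by (simp add: hh)
    have e5: "a + b + d \<le> v5" using bspec[OF v, of 5] s17 by (simp add: hh)
    have lt5: "a + b + d < v5"
    proof (rule ccontr)
      assume "\<not> a + b + d < v5"
      then have e5': "a + b + d = v5" using e5 by simp
      have "a3 + d3 = v67" "b3 + d3 = v67" "a3 + b3 + d3 = v5"
        using bspec[OF s3, of 5] bspec[OF s3, of 6] bspec[OF s3, of 7] s17 by (simp_all add: hh)
      then have "a = a3" "b = b3" "d = d3" using e5' e6 e7 by linarith+
      then have "\<sigma> = tri 5 6 7" using s o3 unfolding tri_def by simp
      then show False using \<sigma>(4) by simp
    qed
    have sc: "\<forall>k\<in>supp c. k \<notin> {6,7,8} \<longrightarrow> a * fst (Pt k) + b * snd (Pt k) + d < hgt val c k"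
      by (rule supp_cases; (simp add: hh)?; insert I1 I2 I3[OF c8] e6 e7 lt5; linarith?)
    have ONsub: "ON \<subseteq> {6,7,8}"
    proof
      fix k assume k: "k \<in> ON"
      then have "k \<in> supp c" "hgt val c k = a * fst (Pt k) + b * snd (Pt k) + d" unfolding ON_def by auto
      then show "k \<in> {6,7,8}" using sc by force
    qed
    have "6 \<in> ON" "7 \<in> ON" unfolding ON_def using s17 e6 e7 by (auto simp: hh)
    have "8 \<in> ON"
    proof (rule ccontr)
      assume "8 \<notin> ON"
      then have "ON = {6,7}" using ONsub \<open>6 \<in> ON\<close> \<open>7 \<in> ON\<close> by auto
      then have "aff_dim (convex hull ((\<lambda>k. (Pt k, hgt val c k)) ` ON)) \<le> 1"
        by (simp add: aff_dim_convex_hull)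
      then show False using ad unfolding ON_def by simp
    qed
    then have ONe: "ON = {6,7,8}" using ONsub \<open>6 \<in> ON\<close> \<open>7 \<in> ON\<close> by auto
    have "\<sigma> = tri 6 7 8" using s ONe unfolding ON_def[symmetric] tri_def by simp
    then have "dual_vertex val c \<sigma> = (r8 - v67, r8 - v67)" using dv678[OF c8] by simp
    then show ?thesis unfolding dv567 by (simp add: ll_d[where t="r8 - 2 * v67 + v5"] abs_minus_commute algebra_simps)
  qed
  have edges0: "\<forall>e\<in>set outer_edges. e \<subseteq> frontier (newton_polygon c)" if c8: "c8 = 0"
  proof -
    have sp: "supp c = {1,2,3,4,5,6,7}" using c8 supp by simp
    have P: "Pt k \<in> Pt ` supp c" if "k \<in> {1,2,3,4,5,6,7}" for k using that sp by blast
    show ?thesis unfolding outer_edges_def newton_polygon_def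
      apply (simp only: list.set insert_iff empty_iff ball_simps)
      apply (intro conjI)
      apply (rule seg_frontier[where n="(1,1)" and m=3])
      prefer 7 apply (rule seg_frontier[where n="(1,0)" and m=2])
      prefer 13 apply (rule seg_frontier[where n="(0,-1)" and m=0])
      prefer 19 apply (rule seg_frontier[where n="(-1,-1)" and m="-1"])
      prefer 25 apply (rule seg_frontier[where n="(-1,0)" and m=0])
      prefer 31 apply (rule seg_frontier[where n="(0,1)" and m=2])
      apply (auto simp: sp hh inner_Pair zero_prod_def intro: P)
      done
  qed
  have edges1: "\<not> (\<forall>e\<in>set outer_edges. e \<subseteq> frontier (newton_polygon c))" if c8: "c8 \<noteq> 0"
  proof
    assume "\<forall>e\<in>set outer_edges. e \<subseteq> frontier (newton_polygon c)"
    then have "closed_segment (Pt 6) (Pt 7) \<subseteq> frontier (newton_polygon c)" unfolding outer_edges_def by simp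
    moreover have "(1/2, 1/2) \<in> closed_segment (Pt 6) (Pt 7)"
    proof -
      have "midpoint (Pt 6) (Pt 7) \<in> closed_segment (Pt 6) (Pt 7)" by (rule midpoint_in_closed_segment)
      then show ?thesis by (simp add: midpoint_def Pt_vals)
    qed
    moreover have "(1/2, 1/2) \<in> interior (newton_polygon c)"
      unfolding newton_polygon_def
      by (rule interior_pt) (use c8 in \<open>simp_all add: supp image_iff, (metis Pt_vals)+\<close>)
    ultimately show False unfolding frontier_def by blast
  qed
  have lt8: "ereal (- v5 + 2 * v67) < v8"
  proof (cases "c8 = 0")
    case True then show ?thesis using v8inf by simp
  next
    case False then show ?thesis using v8fin[OF False] I3[OF False] by simp
  qed
  have ne: "tri 6 7 8 \<noteq> tri 5 6 7"
  proof
    assume eq: "tri 6 7 8 = tri 5 6 7"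
    have "Pt 5 \<in> tri 5 6 7" by (rule tri_verts(1))
    then show False using nt678_5 unfolding eq by simp
  qed
  have sym: "symmetric_curve val c \<longleftrightarrow> 2 * v34 = v12 + v67 \<and> v8 = \<infinity>"
    unfolding symmetric_curve_def qs by (cases "c8 = 0") (simp_all add: edges0 edges1 v8inf)
  show ?thesis
    unfolding c_def[symmetric] r8_def[symmetric] sym
  proof (intro conjI impI)
    show "quasi_symmetric val c \<longleftrightarrow> 2 * v34 = v12 + v67 \<and> ereal (- v5 + 2 * v67) < v8"
      using qs lt8 by simp
    fix q assume q: "quasi_symmetric val c"
    show "\<forall>l \<in> set (hex_side_lengths val c). l = \<bar>v34 - v5\<bar>" by (rule qsl[OF q])
    assume c8: "c8 \<noteq> 0"
    show "\<exists>\<sigma> \<in> cells val c. Pt 6 \<in> \<sigma> \<and> Pt 7 \<in> \<sigma> \<and> \<sigma> \<noteq> tri 5 6 7"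
      by (intro bexI[OF _ ex678[OF c8]] conjI tri_verts ne)
    show "\<forall>\<sigma> \<in> cells val c. Pt 6 \<in> \<sigma> \<and> Pt 7 \<in> \<sigma> \<and> \<sigma> \<noteq> tri 5 6 7 \<longrightarrow>
           lattice_length (dual_vertex val c (tri 5 6 7)) (dual_vertex val c \<sigma>) = \<bar>v5 - 2 * v67 + r8\<bar>"
      by (intro ballI impI, elim conjE, rule allp[OF c8])
  qed simp
qed


end
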